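(* Let $\mathcal F=(F_n)_{n\in\mathbb N}$ be an indexed family. If there are $A,B\in\mathcal F$ with $A\neq B$ and $A\cap B\neq\emptyset$, then $\mathcal F$ is not PRT-learnable.
   Context: An indexed family is a sequence $\mathcal F=(F_n)_{n\in\mathbb N}$ of subsets of $\mathbb N$ that is uniformly computably enumerable (the set $\{\langle a,i\rangle : a\in F_i\}$ is c.e.); a set may occur with several indices, and $F\in\mathcal F$ means $F=F_n$ for some $n$. The minimal index $\mathrm{mi}_{\mathcal F}(F)$ is the least $n$ with $F_n=F$. An enumeration of a nonempty set $A$ is an infinite sequence of elements of $A$ in which every element of $A$ occurs; $f\restriction n$ denotes the initial segment of length $n$. A learner is a partial computable function from finite strings of natural numbers to natural numbers (hypotheses); hypothesis $h$ is interpreted as $F_h$. $M$ converges to a correct index on an enumeration $f$ of $F$ if there is $i$ with $M(f\restriction j)=M(f\restriction i)$ for all $j\ge i$ and $F_{M(f\restriction i)}=F$. $\mathcal F$ is PRT-learnable if there are a learner $M$ and a polynomial $p$ such that for every $F\in\mathcal F$ and every enumeration $f$ of $F$, $M$ converges to a correct index on $f$ in fewer than $p(\mathrm{mi}_{\mathcal F}(F))$ computation steps. *)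

theory Defs
  imports "HOL-Library.Nat_Bijection" "HOL-Computational_Algebra.Polynomial"
begin

datatype instr =
    Inc nat nat
  | Dec nat nat nat

type_synonym config = "nat \<times> (nat \<Rightarrow> nat)"

definition rm_step :: "instr list \<Rightarrow> config \<Rightarrow> config" where
  "rm_step P c = (let (pc, R) = c in
     if pc < length P then
       (case P ! pc of
          Inc r k \<Rightarrow> (k, R(r := Suc (R r)))
        | Dec r k1 k2 \<Rightarrow> (if R r = 0 then (k2, R) else (k1, R(r := R r - 1))))
     else c)"

definition rm_init :: "nat \<Rightarrow> config" where
  "rm_init x = (0, (\<lambda>r. if r = 0 then x else 0))"

definition rm_run :: "instr list \<Rightarrow> nat \<Rightarrow> nat \<Rightarrow> config" where
  "rm_run P x n = (rm_step P ^^ n) (rm_init x)"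

definition rm_halted :: "instr list \<Rightarrow> nat \<Rightarrow> nat \<Rightarrow> bool" where
  "rm_halted P x n \<longleftrightarrow> length P \<le> fst (rm_run P x n)"

definition rm_halts :: "instr list \<Rightarrow> nat \<Rightarrow> bool" where
  "rm_halts P x \<longleftrightarrow> (\<exists>n. rm_halted P x n)"

text \<open>Number of computation steps: executed instructions plus one final halting step.\<close>
definition rm_time :: "instr list \<Rightarrow> nat \<Rightarrow> nat" where
  "rm_time P x = Suc (LEAST n. rm_halted P x n)"

text \<open>Output: content of register 0 on halting (meaningful only if rm_halts P x).\<close>
definition rm_out :: "instr list \<Rightarrow> nat \<Rightarrow> nat" where
  "rm_out P x = snd (rm_run P x (LEAST n. rm_halted P x n)) 0"

definition ce :: "nat set \<Rightarrow> bool" where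
  "ce S \<longleftrightarrow> (\<exists>P. \<forall>x. x \<in> S \<longleftrightarrow> rm_halts P x)"

definition indexed_family :: "(nat \<Rightarrow> nat set) \<Rightarrow> bool" where
  "indexed_family F \<longleftrightarrow> ce {prod_encode (a, i) | a i. a \<in> F i}"

definition in_family :: "nat set \<Rightarrow> (nat \<Rightarrow> nat set) \<Rightarrow> bool" where
  "in_family A F \<longleftrightarrow> (\<exists>n. F n = A)"

definition min_index :: "(nat \<Rightarrow> nat set) \<Rightarrow> nat set \<Rightarrow> nat" where
  "min_index F A = (LEAST n. F n = A)"

definition enumeration :: "(nat \<Rightarrow> nat) \<Rightarrow> nat set \<Rightarrow> bool" where
  "enumeration f A \<longleftrightarrow> A \<noteq> {} \<and> range f = A"

definition init_seg :: "(nat \<Rightarrow> nat) \<Rightarrow> nat \<Rightarrow> nat list" where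
  "init_seg f n = map f [0..<n]"

definition learner_defined :: "instr list \<Rightarrow> nat list \<Rightarrow> bool" where
  "learner_defined M s \<longleftrightarrow> rm_halts M (list_encode s)"

definition learner_out :: "instr list \<Rightarrow> nat list \<Rightarrow> nat" where
  "learner_out M s = rm_out M (list_encode s)"

definition learner_time :: "instr list \<Rightarrow> nat list \<Rightarrow> nat" where
  "learner_time M s = rm_time M (list_encode s)"

definition converges_within :: "(nat \<Rightarrow> nat set) \<Rightarrow> instr list \<Rightarrow> (nat \<Rightarrow> nat) \<Rightarrow> nat set \<Rightarrow> nat \<Rightarrow> bool" where
  "converges_within F M f A b \<longleftrightarrow>
     (\<exists>i. (\<forall>j\<le>i. learner_defined M (init_seg f j))
        \<and> (\<forall>j\<ge>i. learner_defined M (init_seg f j)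
                  \<and> learner_out M (init_seg f j) = learner_out M (init_seg f i))
        \<and> F (learner_out M (init_seg f i)) = A
        \<and> (\<Sum>j\<le>i. learner_time M (init_seg f j)) < b)"

definition PRT_learnable :: "(nat \<Rightarrow> nat set) \<Rightarrow> bool" where
  "PRT_learnable F \<longleftrightarrow>
     (\<exists>M (p :: nat poly). \<forall>A. in_family A F \<longrightarrow>
        (\<forall>f. enumeration f A \<longrightarrow> converges_within F M f A (poly p (min_index F A))))"

end

theory Submission
  imports Defs
begin

lemma conv_at:
  assumes "converges_within F M f C b" "b \<le> N"
  shows "F (learner_out M (init_seg f N)) = C"
proof -
  obtain i where d: "\<forall>j\<ge>i. learner_defined M (init_seg f j)
                  \<and> learner_out M (init_seg f j) = learner_out M (init_seg f i)"
    and c: "F (learner_out M (init_seg f i)) = C"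
    and s: "(\<Sum>j\<le>i. learner_time M (init_seg f j)) < b"
    using assms(1) unfolding converges_within_def by blast
  have "(\<Sum>j\<le>i. (1::nat)) \<le> (\<Sum>j\<le>i. learner_time M (init_seg f j))"
    by (rule sum_mono) (simp add: learner_time_def rm_time_def)
  then have "i < N" using s assms(2) by simp
  then have "learner_out M (init_seg f N) = learner_out M (init_seg f i)"
    using d less_imp_le by blast
  then show ?thesis using c by simp
qed

lemma enum_ex:
  fixes x N :: nat
  assumes "x \<in> C"
  defines "g \<equiv> (\<lambda>n. if N \<le> n \<and> n - N \<in> C then n - N else x)"
  shows "enumeration g C" "init_seg g N = init_seg (\<lambda>_. x) N"
proof -
  have "range g \<subseteq> C" using assms by (auto simp: g_def)
  moreover have "C \<subseteq> range g"
  proof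
    fix a assume "a \<in> C"
    then have "g (a + N) = a" by (simp add: g_def)
    then show "a \<in> range g" by (metis rangeI)
  qed
  ultimately show "enumeration g C" using assms(1) unfolding enumeration_def by blast
  show "init_seg g N = init_seg (\<lambda>_. x) N" by (simp add: init_seg_def g_def)
qed

theorem proposition3p2:
  fixes F :: "nat \<Rightarrow> nat set" and A B :: "nat set"
  assumes "indexed_family F"
    and "in_family A F" and "in_family B F"
    and "A \<noteq> B" and "A \<inter> B \<noteq> {}"
  shows "\<not> PRT_learnable F"
proof
  assume "PRT_learnable F"
  then obtain M and p :: "nat poly" where H: "\<forall>A. in_family A F \<longrightarrow>
        (\<forall>f. enumeration f A \<longrightarrow> converges_within F M f A (poly p (min_index F A)))"
    unfolding PRT_learnable_def by blast
  obtain x where x: "x \<in> A" "x \<in> B" using assms(5) by blast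
  define N where "N = poly p (min_index F A) + poly p (min_index F B)"
  define gA where "gA = (\<lambda>n. if N \<le> n \<and> n - N \<in> A then n - N else x)"
  define gB where "gB = (\<lambda>n. if N \<le> n \<and> n - N \<in> B then n - N else x)"
  have eA: "enumeration gA A" "init_seg gA N = init_seg (\<lambda>_. x) N"
    unfolding gA_def by (rule enum_ex[OF x(1)])+
  have eB: "enumeration gB B" "init_seg gB N = init_seg (\<lambda>_. x) N"
    unfolding gB_def by (rule enum_ex[OF x(2)])+
  have "F (learner_out M (init_seg gA N)) = A"
    by (rule conv_at[OF H[rule_format, OF assms(2) eA(1)]]) (simp add: N_def)
  moreover have "F (learner_out M (init_seg gB N)) = B"
    by (rule conv_at[OF H[rule_format, OF assms(3) eB(1)]]) (simp add: N_def)
  ultimately show False using eA(2) eB(2) assms(4) by metis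
qed

end
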